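(* For every finite graph $G$: (1) $\widetilde{\omega}(G) \leq \widetilde{\Delta}(G)$, unless $\widetilde{G}$ is edgeless (in which case $\widetilde{\omega}(G) \leq 1$ and $\widetilde{\Delta}(G) = 0$); (2) $\mathsf{cideg}(G) \leq 3^{\lceil \widetilde{\Delta}(G)/3\rceil}$; (3) $\widetilde{\Delta}(G) \leq \mathsf{cideg}(G) \cdot (\widetilde{\omega}(G) - 1)$.
   Context: Two vertices of $G$ are equivalent if they lie in exactly the same maximal cliques of $G$. The clique-quotient graph $\widetilde{G}$ has the equivalence classes as vertices, two distinct classes adjacent iff their representatives are adjacent in $G$. $\widetilde{\Delta}(G)$ is the maximum degree of $\widetilde{G}$. $\widetilde{\omega}(G)$ is the maximum over maximal cliques $K$ of the number of equivalence classes meeting $K$; $\mathsf{cideg}(G)$ is the maximum over vertices $v$ of the number of maximal cliques of $G$ containing $v$. *)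

theory Defs
  imports Complex_Main
begin

definition fin_graph :: "'a set \<Rightarrow> ('a \<Rightarrow> 'a \<Rightarrow> bool) \<Rightarrow> bool" where
  "fin_graph V E \<longleftrightarrow> finite V \<and> (\<forall>x y. E x y \<longrightarrow> x \<in> V \<and> y \<in> V)
     \<and> (\<forall>x y. E x y \<longrightarrow> E y x) \<and> (\<forall>x. \<not> E x x)"

definition is_clique :: "'a set \<Rightarrow> ('a \<Rightarrow> 'a \<Rightarrow> bool) \<Rightarrow> 'a set \<Rightarrow> bool" where
  "is_clique V E K \<longleftrightarrow> K \<subseteq> V \<and> (\<forall>x\<in>K. \<forall>y\<in>K. x \<noteq> y \<longrightarrow> E x y)"

definition max_clique :: "'a set \<Rightarrow> ('a \<Rightarrow> 'a \<Rightarrow> bool) \<Rightarrow> 'a set \<Rightarrow> bool" where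
  "max_clique V E K \<longleftrightarrow> is_clique V E K \<and> (\<forall>K'. is_clique V E K' \<and> K \<subseteq> K' \<longrightarrow> K' = K)"

definition cliques_at :: "'a set \<Rightarrow> ('a \<Rightarrow> 'a \<Rightarrow> bool) \<Rightarrow> 'a \<Rightarrow> 'a set set" where
  "cliques_at V E v = {K. max_clique V E K \<and> v \<in> K}"

definition clique_class :: "'a set \<Rightarrow> ('a \<Rightarrow> 'a \<Rightarrow> bool) \<Rightarrow> 'a \<Rightarrow> 'a set" where
  "clique_class V E v = {u \<in> V. cliques_at V E u = cliques_at V E v}"

definition clique_classes :: "'a set \<Rightarrow> ('a \<Rightarrow> 'a \<Rightarrow> bool) \<Rightarrow> 'a set set" where
  "clique_classes V E = clique_class V E ` V"

definition quot_adj :: "'a set \<Rightarrow> ('a \<Rightarrow> 'a \<Rightarrow> bool) \<Rightarrow> 'a set \<Rightarrow> 'a set \<Rightarrow> bool" where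
  "quot_adj V E C D \<longleftrightarrow> C \<noteq> D \<and> (\<exists>u\<in>C. \<exists>v\<in>D. E u v)"

definition quot_deg :: "'a set \<Rightarrow> ('a \<Rightarrow> 'a \<Rightarrow> bool) \<Rightarrow> 'a set \<Rightarrow> nat" where
  "quot_deg V E C = card {D \<in> clique_classes V E. quot_adj V E C D}"

definition quot_edgeless :: "'a set \<Rightarrow> ('a \<Rightarrow> 'a \<Rightarrow> bool) \<Rightarrow> bool" where
  "quot_edgeless V E \<longleftrightarrow> (\<forall>C\<in>clique_classes V E. \<forall>D\<in>clique_classes V E. \<not> quot_adj V E C D)"

text \<open>Maxima over possibly empty index sets are taken with the convention max {} = 0.\<close>
definition tDelta :: "'a set \<Rightarrow> ('a \<Rightarrow> 'a \<Rightarrow> bool) \<Rightarrow> nat" where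
  "tDelta V E = Max (insert 0 (quot_deg V E ` clique_classes V E))"

definition tomega :: "'a set \<Rightarrow> ('a \<Rightarrow> 'a \<Rightarrow> bool) \<Rightarrow> nat" where
  "tomega V E = Max (insert 0 {card {C \<in> clique_classes V E. C \<inter> K \<noteq> {}} | K. max_clique V E K})"

definition cideg :: "'a set \<Rightarrow> ('a \<Rightarrow> 'a \<Rightarrow> bool) \<Rightarrow> nat" where
  "cideg V E = Max (insert 0 ((\<lambda>v. card (cliques_at V E v)) ` V))"

end

theory Submission
  imports Defs
begin

definition aclq :: "('b \<Rightarrow> 'b \<Rightarrow> bool) \<Rightarrow> 'b set \<Rightarrow> bool" where
  "aclq R S \<longleftrightarrow> (\<forall>x\<in>S. \<forall>y\<in>S. x \<noteq> y \<longrightarrow> R x y)"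

definition amc :: "'b set \<Rightarrow> ('b \<Rightarrow> 'b \<Rightarrow> bool) \<Rightarrow> 'b set \<Rightarrow> bool" where
  "amc N R S \<longleftrightarrow> S \<subseteq> N \<and> aclq R S \<and> (\<forall>T. T \<subseteq> N \<and> aclq R T \<and> S \<subseteq> T \<longrightarrow> T = S)"

lemma cube_le_pow3: "(k::nat)^3 \<le> 3^k"
proof (induction k rule: less_induct)
  case (less k)
  show ?case
  proof (cases "k \<le> 3")
    case True
    then have "k = 0 \<or> k = 1 \<or> k = 2 \<or> k = 3" by auto
    then show ?thesis by auto
  next
    case False
    then obtain j where j: "k = Suc j" "j \<ge> 3" by (cases k) auto
    have ih: "j^3 \<le> 3^j" using less j by auto
    have a: "3*j^2 \<le> j^3"
    proof -
      have "3*j^2 \<le> j*j^2" using mult_le_mono1[OF j(2)] by simp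
      then show ?thesis by (simp add: power2_eq_square power3_eq_cube)
    qed
    have b: "3*j + 1 \<le> j^3"
    proof -
      have jj: "9 \<le> j*j" using mult_le_mono[OF j(2) j(2)] by simp
      have "9*j \<le> j*j*j" using mult_le_mono1[OF jj] by simp
      moreover have "3*j+1 \<le> 9*j" using j(2) by simp
      ultimately have "3*j+1 \<le> j*j*j" by linarith
      then show ?thesis by (simp only: power3_eq_cube)
    qed
    have "(Suc j)^3 = j^3 + 3*j^2 + 3*j + 1" by (simp add: power2_eq_square power3_eq_cube algebra_simps)
    also have "\<dots> \<le> 3 * j^3" using a b by linarith
    also have "\<dots> \<le> 3 * 3^j" using ih by simp
    also have "\<dots> = 3^(Suc j)" by (rule power_Suc[symmetric])
    finally show ?thesis using j(1) by simp
  qed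
qed

lemma k_le_powr: "real k \<le> 3 powr (real k / 3)"
proof -
  have "(3 powr (real k / 3))^3 = 3 powr (real k)"
    by (simp add: powr_realpow[symmetric] powr_powr)
  also have "\<dots> = 3^k" by (simp add: powr_realpow)
  finally have e: "(3 powr (real k / 3))^3 = 3^k" .
  have "(real k)^3 \<le> 3^k" using cube_le_pow3[of k] by (metis of_nat_le_iff of_nat_numeral of_nat_power)
  then have "(real k)^3 \<le> (3 powr (real k / 3))^3" using e by simp
  then show ?thesis by simp
qed

lemma amc_finite: "finite N \<Longrightarrow> finite {S. amc N R S}"
  by (rule finite_subset[of _ "Pow N"]) (auto simp: amc_def)

lemma moon_moser:
  assumes "finite N" and sym: "\<And>x y. R x y \<Longrightarrow> R y x"
  shows "real (card {S. amc N R S}) \<le> 3 powr (real (card N) / 3)"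
  using assms(1)
proof (induction "card N" arbitrary: N rule: less_induct)
  case less
  show ?case
  proof (cases "N = {}")
    case True
    have "{S. amc N R S} = {{}}" using True by (auto simp: amc_def aclq_def)
    then show ?thesis using True by simp
  next
    case False
    define a where "a w = {u \<in> N. u = w \<or> \<not> R w u}" for w
    obtain v0 where v0: "v0 \<in> N" using False by auto
    obtain v where v: "v \<in> N" "\<forall>w. w \<in> N \<longrightarrow> card (a v) \<le> card (a w)"
      using ex_has_least_nat[of "\<lambda>x. x \<in> N" v0 "\<lambda>x. card (a x)"] v0 by auto
    define k where "k = card (a v)"
    have fa: "finite (a w)" for w using less.prems by (auto simp: a_def)
    have aN: "a w \<subseteq> N" for w by (auto simp: a_def)
    have kn: "k \<le> card N" unfolding k_def using aN less.prems by (simp add: card_mono)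
    have cover: "{S. amc N R S} \<subseteq> (\<Union>w\<in>a v. {S. amc N R S \<and> w \<in> S})"
    proof
      fix S assume S: "S \<in> {S. amc N R S}"
      have "\<exists>w\<in>a v. w \<in> S"
      proof (rule ccontr)
        assume "\<not> ?thesis"
        then have h: "\<forall>w\<in>S. w \<noteq> v \<and> R v w" using S by (auto simp: a_def amc_def)
        have "aclq R (insert v S)" using S h sym by (auto simp: amc_def aclq_def)
        moreover have "insert v S \<subseteq> N" using S v by (auto simp: amc_def)
        ultimately have "insert v S = S" using S unfolding amc_def mem_Collect_eq
          by (metis subset_insertI)
        then show False using h by auto
      qed
      then show "S \<in> (\<Union>w\<in>a v. {S. amc N R S \<and> w \<in> S})" using S by auto
    qed
    have each: "real (card {S. amc N R S \<and> w \<in> S}) \<le> 3 powr ((real (card N) - real k) / 3)"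
      if w: "w \<in> a v" for w
    proof -
      have wN: "w \<in> N" using w aN by auto
      define N' where "N' = N - a w"
      have fN': "finite N'" using less.prems by (simp add: N'_def)
      have wa: "w \<in> a w" using wN by (simp add: a_def)
      have cN': "card N' = card N - card (a w)" unfolding N'_def
        using card_Diff_subset[OF fa aN] .
      have caw: "card (a w) \<ge> 1" using wa fa[of w] by (metis One_nat_def Suc_leI card_gt_0_iff empty_iff)
      have ckw: "k \<le> card (a w)" using v wN k_def by auto
      have "card (a w) \<le> card N" using aN less.prems by (simp add: card_mono)
      then have lt: "card N' < card N" using cN' caw by linarith
      have ih: "real (card {S. amc N' R S}) \<le> 3 powr (real (card N') / 3)"
        using less.hyps[OF lt fN'] .
      have inj: "inj_on (\<lambda>S. S - {w}) {S. amc N R S \<and> w \<in> S}"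
        by (rule inj_onI) (metis CollectD insert_Diff)
      have img: "(\<lambda>S. S - {w}) ` {S. amc N R S \<and> w \<in> S} \<subseteq> {S. amc N' R S}"
      proof
        fix T assume "T \<in> (\<lambda>S. S - {w}) ` {S. amc N R S \<and> w \<in> S}"
        then obtain S where S: "amc N R S" "w \<in> S" and T: "T = S - {w}" by auto
        have sub: "T \<subseteq> N'"
          using S unfolding T N'_def amc_def aclq_def a_def by auto
        have cl: "aclq R T" using S unfolding T amc_def aclq_def by auto
        have mx: "T' = T" if T': "T' \<subseteq> N'" "aclq R T'" "T \<subseteq> T'" for T'
        proof -
          have "aclq R (insert w T')"
            using T' sym unfolding aclq_def N'_def a_def by blast
          moreover have "insert w T' \<subseteq> N" using T' wN N'_def by auto
          moreover have "S \<subseteq> insert w T'" using T' T by auto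
          ultimately have "insert w T' = S" using S(1) by (auto simp: amc_def)
          moreover have "w \<notin> T'" using T' wa N'_def by auto
          ultimately show ?thesis using T by auto
        qed
        show "T \<in> {S. amc N' R S}" using sub cl mx by (auto simp: amc_def)
      qed
      have "card {S. amc N R S \<and> w \<in> S} \<le> card {S. amc N' R S}"
        by (rule card_inj_on_le[OF inj img amc_finite[OF fN']])
      then have "real (card {S. amc N R S \<and> w \<in> S}) \<le> 3 powr (real (card N') / 3)"
        using ih by linarith
      also have "\<dots> \<le> 3 powr ((real (card N) - real k) / 3)"
        using cN' ckw kn caw \<open>card (a w) \<le> card N\<close> by (intro powr_mono) (auto simp: of_nat_diff)
      finally show ?thesis .
    qed
    have "card {S. amc N R S} \<le> card (\<Union>w\<in>a v. {S. amc N R S \<and> w \<in> S})"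
      by (rule card_mono[OF _ cover]) (auto intro: finite_subset[OF _ amc_finite[OF less.prems]] fa)
    also have "\<dots> \<le> (\<Sum>w\<in>a v. card {S. amc N R S \<and> w \<in> S})" by (rule card_UN_le[OF fa])
    finally have "real (card {S. amc N R S}) \<le> (\<Sum>w\<in>a v. real (card {S. amc N R S \<and> w \<in> S}))"
      by (metis of_nat_le_iff of_nat_sum)
    also have "\<dots> \<le> (\<Sum>w\<in>a v. 3 powr ((real (card N) - real k) / 3))"
      by (rule sum_mono) (rule each)
    also have "\<dots> = real k * 3 powr ((real (card N) - real k) / 3)" by (simp add: k_def)
    also have "\<dots> \<le> 3 powr (real k / 3) * 3 powr ((real (card N) - real k) / 3)"
      by (rule mult_right_mono[OF k_le_powr]) simp
    also have "\<dots> = 3 powr (real (card N) / 3)"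
      by (simp add: powr_add[symmetric] add_divide_distrib[symmetric])
    finally show ?thesis .
  qed
qed

context
  fixes V :: "'a set" and E :: "'a \<Rightarrow> 'a \<Rightarrow> bool"
  assumes G: "fin_graph V E"
begin

lemma finV: "finite V" using G by (simp add: fin_graph_def)
lemma EV: "E x y \<Longrightarrow> x \<in> V \<and> y \<in> V" using G by (simp add: fin_graph_def)
lemma Esym: "E x y \<Longrightarrow> E y x" using G by (simp add: fin_graph_def)
lemma Eirr: "\<not> E x x" using G by (simp add: fin_graph_def)

lemma mc_sub: "max_clique V E K \<Longrightarrow> K \<subseteq> V"
  by (simp add: max_clique_def is_clique_def)

lemma mc_max: "max_clique V E K \<Longrightarrow> is_clique V E K' \<Longrightarrow> K \<subseteq> K' \<Longrightarrow> K' = K"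
  unfolding max_clique_def by blast

lemma mc_E: "max_clique V E K \<Longrightarrow> x \<in> K \<Longrightarrow> y \<in> K \<Longrightarrow> x \<noteq> y \<Longrightarrow> E x y"
  unfolding max_clique_def is_clique_def by blast

lemma fin_mc: "finite {K. max_clique V E K}"
  by (rule finite_subset[of _ "Pow V"]) (auto dest: mc_sub simp: finV)

lemma fin_cl: "finite (clique_classes V E)"
  by (simp add: clique_classes_def finV)

lemma class_self: "v \<in> V \<Longrightarrow> v \<in> clique_class V E v"
  by (simp add: clique_class_def)

lemma class_mem: "u \<in> clique_class V E v \<longleftrightarrow> u \<in> V \<and> cliques_at V E u = cliques_at V E v"
  by (simp add: clique_class_def)

lemma class_eq: "C \<in> clique_classes V E \<Longrightarrow> x \<in> C \<Longrightarrow> C = clique_class V E x"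
  by (auto simp: clique_classes_def clique_class_def)

lemma class_ne: "C \<in> clique_classes V E \<Longrightarrow> \<exists>x. x \<in> C"
  by (auto simp: clique_classes_def intro: class_self)

lemma class_in: "x \<in> V \<Longrightarrow> clique_class V E x \<in> clique_classes V E"
  by (simp add: clique_classes_def)

lemma class_subV: "C \<in> clique_classes V E \<Longrightarrow> C \<subseteq> V"
  by (auto simp: clique_classes_def clique_class_def)

lemma extend: "is_clique V E S \<Longrightarrow> \<exists>K. max_clique V E K \<and> S \<subseteq> K"
proof -
  assume S: "is_clique V E S"
  let ?F = "{K. is_clique V E K \<and> S \<subseteq> K}"
  have "finite ?F" by (rule finite_subset[of _ "Pow V"]) (auto simp: is_clique_def finV)
  moreover have "?F \<noteq> {}" using S by auto
  ultimately obtain K where K: "K \<in> ?F" "\<forall>b\<in>?F. K \<subseteq> b \<longrightarrow> K = b"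
    using finite_has_maximal by (metis (no_types, lifting))
  then have "max_clique V E K" unfolding max_clique_def by auto
  then show ?thesis using K by auto
qed

lemma in_K_class: "max_clique V E K \<Longrightarrow> x \<in> K \<Longrightarrow> y \<in> clique_class V E x \<Longrightarrow> y \<in> K"
  by (auto simp: clique_class_def cliques_at_def)

lemma class_in_K: "max_clique V E K \<Longrightarrow> C \<in> clique_classes V E \<Longrightarrow> C \<inter> K \<noteq> {} \<Longrightarrow> C \<subseteq> K"
proof -
  assume K: "max_clique V E K" and C: "C \<in> clique_classes V E" and "C \<inter> K \<noteq> {}"
  then obtain x where x: "x \<in> C" "x \<in> K" by auto
  have "C = clique_class V E x" by (rule class_eq[OF C x(1)])
  then show "C \<subseteq> K" using in_K_class[OF K x(2)] by auto
qed

lemma full_adj: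
  assumes C: "C \<in> clique_classes V E" and D: "D \<in> clique_classes V E" and "quot_adj V E C D"
    and x: "x \<in> C" and y: "y \<in> D"
  shows "E x y"
proof -
  obtain u w where uw: "u \<in> C" "w \<in> D" "E u w" "C \<noteq> D" using assms(3) by (auto simp: quot_adj_def)
  have "is_clique V E {u, w}" using uw EV Esym by (auto simp: is_clique_def)
  then obtain K where K: "max_clique V E K" "{u,w} \<subseteq> K" using extend by blast
  have "x \<in> K" using in_K_class[OF K(1), of u x] K(2) class_eq[OF C uw(1)] x by auto
  moreover have "y \<in> K" using in_K_class[OF K(1), of w y] K(2) class_eq[OF D uw(2)] y by auto
  moreover have "x \<noteq> y" using class_eq[OF C x] class_eq[OF D y] uw(4) by auto
  ultimately show ?thesis using mc_E[OF K(1)] by blast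
qed

lemma quot_sym: "quot_adj V E C D \<Longrightarrow> quot_adj V E D C"
  by (auto simp: quot_adj_def dest: Esym)

abbreviation CK where "CK K \<equiv> {C \<in> clique_classes V E. C \<inter> K \<noteq> {}}"

lemma fin_om: "finite {card (CK K) | K. max_clique V E K}"
  using fin_mc by (simp add: setcompr_eq_image)

lemma fin_CK: "finite (CK K)" using fin_cl by simp

lemma CK_le: "max_clique V E K \<Longrightarrow> card (CK K) \<le> tomega V E"
  unfolding tomega_def using fin_om by (intro Max_ge) auto

lemma fin_nb: "finite {D \<in> clique_classes V E. quot_adj V E C D}" using fin_cl by simp

lemma deg_le: "C \<in> clique_classes V E \<Longrightarrow> quot_deg V E C \<le> tDelta V E"
  unfolding tDelta_def using fin_cl by (intro Max_ge) auto

lemma fin_ca: "finite (cliques_at V E v)"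
  by (rule finite_subset[OF _ fin_mc]) (auto simp: cliques_at_def)

lemma ca_le: "v \<in> V \<Longrightarrow> card (cliques_at V E v) \<le> cideg V E"
  unfolding cideg_def using finV by (intro Max_ge) auto

lemma class_eqI: "cliques_at V E u = cliques_at V E v \<Longrightarrow> clique_class V E u = clique_class V E v"
  by (simp add: clique_class_def)

lemma part1:
  assumes ne: "\<not> quot_edgeless V E"
  shows "tomega V E \<le> tDelta V E"
proof -
  obtain C0 D0 where CD: "C0 \<in> clique_classes V E" "D0 \<in> clique_classes V E" "quot_adj V E C0 D0"
    using ne by (auto simp: quot_edgeless_def)
  have "0 < quot_deg V E C0" unfolding quot_deg_def using CD fin_nb[of C0]
    by (subst card_gt_0_iff) auto
  then have d1: "1 \<le> tDelta V E" using deg_le[OF CD(1)] by linarith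
  have bound: "card (CK K) \<le> tDelta V E" if K: "max_clique V E K" for K
  proof (cases "card (CK K) \<le> 1")
    case True then show ?thesis using d1 by linarith
  next
    case False
    then obtain C1 C2 where C12: "C1 \<in> CK K" "C2 \<in> CK K" "C1 \<noteq> C2"
      using card_le_Suc0_iff_eq[OF fin_CK[of K]] by auto
    obtain u v where uv: "u \<in> C1" "u \<in> K" "v \<in> C2" "v \<in> K" using C12 by auto
    have "cliques_at V E u \<noteq> cliques_at V E v"
    proof
      assume "cliques_at V E u = cliques_at V E v"
      then have "clique_class V E u = clique_class V E v" by (rule class_eqI)
      then show False using class_eq[of C1 u] class_eq[of C2 v] C12 uv by auto
    qed
    then obtain x y K' where xy: "x \<in> K" "y \<in> K" "max_clique V E K'" "x \<in> K'" "y \<notin> K'"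
      using uv by (auto simp: cliques_at_def)
    have "\<not> K' \<subseteq> K"
    proof
      assume "K' \<subseteq> K"
      then have "K = K'" using xy(3) K by (auto simp: max_clique_def)
      then show False using xy by auto
    qed
    then obtain w where w: "w \<in> K'" "w \<notin> K" by auto
    have xw: "x \<noteq> w" using xy w by auto
    have Exw: "E x w" using mc_E[OF xy(3) xy(4) w(1) xw] .
    have xV: "x \<in> V" and wV: "w \<in> V" using EV[OF Exw] by auto
    let ?cx = "clique_class V E x" and ?cw = "clique_class V E w"
    have cx: "?cx \<in> CK K" using xy(1) xV class_self class_in by auto
    have cw: "?cw \<notin> CK K"
    proof
      assume "?cw \<in> CK K"
      then have "?cw \<subseteq> K" using class_in_K K by blast
      then show False using class_self[OF wV] w by auto
    qed
    have sub: "insert ?cw (CK K - {?cx}) \<subseteq> {D \<in> clique_classes V E. quot_adj V E ?cx D}"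
    proof
      fix D assume D: "D \<in> insert ?cw (CK K - {?cx})"
      show "D \<in> {D \<in> clique_classes V E. quot_adj V E ?cx D}"
      proof (cases "D = ?cw")
        case True
        then show ?thesis using class_in[OF wV] cx cw Exw class_self[OF xV] class_self[OF wV]
          by (auto simp: quot_adj_def)
      next
        case False
        then have D': "D \<in> CK K" "D \<noteq> ?cx" using D by auto
        then obtain d where d: "d \<in> D" "d \<in> K" by auto
        have "d \<noteq> x"
        proof
          assume "d = x"
          then have "D = ?cx" using class_eq[of D d] D'(1) d(1) by simp
          then show False using D'(2) by simp
        qed
        then have "E x d" using mc_E[OF K xy(1) d(2)] by simp
        then show ?thesis using D' d class_self[OF xV] by (auto simp: quot_adj_def)
      qed
    qed
    have "card (insert ?cw (CK K - {?cx})) = card (CK K)"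
      using cw cx fin_CK[of K] False by (simp add: card_Diff_singleton)
    then have "card (CK K) \<le> quot_deg V E ?cx"
      unfolding quot_deg_def using card_mono[OF fin_nb sub] by simp
    also have "\<dots> \<le> tDelta V E" using deg_le class_in[OF xV] by blast
    finally show ?thesis .
  qed
  show ?thesis unfolding tomega_def using fin_om bound
    by (intro Max.boundedI) auto
qed

lemma part1b:
  assumes e: "quot_edgeless V E"
  shows "tomega V E \<le> 1 \<and> tDelta V E = 0"
proof
  have "card (CK K) \<le> 1" if "max_clique V E K" for K
  proof -
    have "C = D" if CDK: "C \<in> CK K" "D \<in> CK K" for C D
    proof (rule ccontr)
      assume ne: "C \<noteq> D"
      obtain c d where cd: "c \<in> C" "c \<in> K" "d \<in> D" "d \<in> K" using CDK by auto
      have "c \<noteq> d"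
      proof
        assume "c = d"
        then have "C = D" using class_eq[of C c] class_eq[of D d] CDK cd by simp
        then show False using ne by simp
      qed
      then have "E c d" using mc_E[OF \<open>max_clique V E K\<close> cd(2) cd(4)] by simp
      then have "quot_adj V E C D" using ne cd by (auto simp: quot_adj_def)
      then show False using e CDK by (auto simp: quot_edgeless_def)
    qed
    then show ?thesis using card_le_Suc0_iff_eq[OF fin_CK[of K]] by auto
  qed
  then show "tomega V E \<le> 1" unfolding tomega_def using fin_om
    by (intro Max.boundedI) auto
  have "quot_deg V E C = 0" if "C \<in> clique_classes V E" for C
  proof -
    have "{D \<in> clique_classes V E. quot_adj V E C D} = {}"
      using e that by (auto simp: quot_edgeless_def)
    then show ?thesis unfolding quot_deg_def by (metis card.empty)
  qed
  then show "tDelta V E = 0" unfolding tDelta_def using fin_cl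
    by (intro antisym Max.boundedI) auto
qed

lemma part3: "int (tDelta V E) \<le> int (cideg V E) * (int (tomega V E) - 1)"
proof (cases "V = {}")
  case True
  then show ?thesis by (simp add: tDelta_def cideg_def clique_classes_def)
next
  case False
  then obtain v0 where v0: "v0 \<in> V" by auto
  have "is_clique V E {v0}" using v0 by (simp add: is_clique_def)
  then obtain K0 where K0: "max_clique V E K0" "v0 \<in> K0" using extend by blast
  have "clique_class V E v0 \<in> CK K0" using v0 K0 class_self class_in by auto
  then have "card (CK K0) \<ge> 1" using fin_CK[of K0] by (metis One_nat_def Suc_leI card_gt_0_iff empty_iff)
  then have om1: "tomega V E \<ge> 1" using CK_le[OF K0(1)] by linarith
  have "quot_deg V E C \<le> cideg V E * (tomega V E - 1)" if C: "C \<in> clique_classes V E" for C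
  proof -
    obtain v where v: "v \<in> V" "C = clique_class V E v" using C by (auto simp: clique_classes_def)
    have vC: "v \<in> C" using v class_self by auto
    have sub: "{D \<in> clique_classes V E. quot_adj V E C D} \<subseteq> (\<Union>K\<in>cliques_at V E v. CK K - {C})"
    proof
      fix D assume D: "D \<in> {D \<in> clique_classes V E. quot_adj V E C D}"
      obtain d where d: "d \<in> D" using class_ne[of D] D by blast
      have Evd: "E v d" using full_adj[OF C _ _ vC d] D by auto
      have "is_clique V E {v, d}" using Evd EV Esym by (auto simp: is_clique_def)
      then obtain K where K: "max_clique V E K" "{v,d} \<subseteq> K" using extend by blast
      have "D \<noteq> C" using D by (auto simp: quot_adj_def)
      then show "D \<in> (\<Union>K\<in>cliques_at V E v. CK K - {C})"
        using K D d by (auto simp: cliques_at_def)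
    qed
    have "quot_deg V E C \<le> card (\<Union>K\<in>cliques_at V E v. CK K - {C})"
      unfolding quot_deg_def by (rule card_mono[OF _ sub]) (auto intro: fin_ca simp: fin_cl)
    also have "\<dots> \<le> (\<Sum>K\<in>cliques_at V E v. card (CK K - {C}))" by (rule card_UN_le[OF fin_ca])
    also have "\<dots> \<le> (\<Sum>K\<in>cliques_at V E v. tomega V E - 1)"
    proof (rule sum_mono)
      fix K assume K: "K \<in> cliques_at V E v"
      then have "C \<in> CK K" using C vC by (auto simp: cliques_at_def)
      then have "card (CK K - {C}) = card (CK K) - 1" using fin_CK by (simp add: card_Diff_singleton)
      then show "card (CK K - {C}) \<le> tomega V E - 1" using CK_le K by (auto simp: cliques_at_def intro!: diff_le_mono)
    qed
    also have "\<dots> = card (cliques_at V E v) * (tomega V E - 1)" by simp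
    also have "\<dots> \<le> cideg V E * (tomega V E - 1)" using ca_le[OF v(1)] by simp
    finally show ?thesis .
  qed
  then have "tDelta V E \<le> cideg V E * (tomega V E - 1)" unfolding tDelta_def using fin_cl
    by (intro Max.boundedI) auto
  then have "int (tDelta V E) \<le> int (cideg V E * (tomega V E - 1))" by linarith
  then show ?thesis using om1 by (simp add: of_nat_diff)
qed

lemma ca_bound:
  assumes vV: "v \<in> V"
  shows "real (card (cliques_at V E v)) \<le> 3 powr (real (quot_deg V E (clique_class V E v)) / 3)"
proof -
  define C where "C = clique_class V E v"
  define N where "N = {D \<in> clique_classes V E. quot_adj V E C D}"
  define f where "f K = {D \<in> N. D \<subseteq> K}" for K
  have vC: "v \<in> C" using vV class_self C_def by auto
  have Ccl: "C \<in> clique_classes V E" using vV class_in C_def by auto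
  have fN: "finite N" using fin_cl N_def by simp
  have key: "x \<in> C \<or> (\<exists>D\<in>f K. x \<in> D)" if K: "K \<in> cliques_at V E v" "x \<in> K" for K x
  proof (cases "clique_class V E x = C")
    case True then show ?thesis using K class_self mc_sub by (auto simp: cliques_at_def)
  next
    case False
    have xV: "x \<in> V" using K mc_sub by (auto simp: cliques_at_def)
    have "x \<noteq> v" using False C_def by auto
    then have "E v x" using K mc_E[of K v x] by (simp add: cliques_at_def)
    then have "quot_adj V E C (clique_class V E x)" using False vC class_self[OF xV]
      by (auto simp: quot_adj_def)
    moreover have "clique_class V E x \<subseteq> K" using K in_K_class by (auto simp: cliques_at_def)
    ultimately have "clique_class V E x \<in> f K" using class_in[OF xV] by (simp add: f_def N_def)
    then show ?thesis using class_self[OF xV] by blast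
  qed
  have CK': "C \<subseteq> K" if "K \<in> cliques_at V E v" for K
    using that in_K_class C_def by (auto simp: cliques_at_def)
  have inj: "inj_on f (cliques_at V E v)"
  proof (rule inj_onI)
    fix K1 K2 assume K: "K1 \<in> cliques_at V E v" "K2 \<in> cliques_at V E v" "f K1 = f K2"
    have "K1 \<subseteq> K2"
    proof
      fix x assume "x \<in> K1"
      then have "x \<in> C \<or> (\<exists>D\<in>f K2. x \<in> D)" using key K by metis
      then show "x \<in> K2" using CK'[OF K(2)] by (auto simp: f_def)
    qed
    moreover have "K2 \<subseteq> K1"
    proof
      fix x assume "x \<in> K2"
      then have "x \<in> C \<or> (\<exists>D\<in>f K1. x \<in> D)" using key K by metis
      then show "x \<in> K1" using CK'[OF K(1)] by (auto simp: f_def)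
    qed
    ultimately show "K1 = K2" by blast
  qed
  have img: "f ` cliques_at V E v \<subseteq> {S. amc N (quot_adj V E) S}"
  proof
    fix S assume "S \<in> f ` cliques_at V E v"
    then obtain K where K: "K \<in> cliques_at V E v" and S: "S = f K" by auto
    have mK: "max_clique V E K" "v \<in> K" using K by (auto simp: cliques_at_def)
    have sN: "S \<subseteq> N" using S f_def by auto
    have cl: "aclq (quot_adj V E) S"
      unfolding aclq_def
    proof (intro ballI impI)
      fix D1 D2 assume D: "D1 \<in> S" "D2 \<in> S" "D1 \<noteq> D2"
      have D12: "D1 \<in> clique_classes V E" "D2 \<in> clique_classes V E" "D1 \<subseteq> K" "D2 \<subseteq> K"
        using D S by (auto simp: f_def N_def)
      obtain d1 where d1: "d1 \<in> D1" using class_ne[OF D12(1)] by blast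
      obtain d2 where d2: "d2 \<in> D2" using class_ne[OF D12(2)] by blast
      note d = d1 d2
      have "d1 \<noteq> d2"
      proof
        assume "d1 = d2"
        then have "D1 = D2" using class_eq[OF D12(1) d1] class_eq[OF D12(2) d2] by simp
        then show False using D(3) by simp
      qed
      moreover have "d1 \<in> K" "d2 \<in> K" using d D12 by auto
      ultimately have "E d1 d2" using mc_E[OF mK(1)] by simp
      then show "quot_adj V E D1 D2" using d D(3) by (auto simp: quot_adj_def)
    qed
    have mx: "T = S" if T: "T \<subseteq> N" "aclq (quot_adj V E) T" "S \<subseteq> T" for T
    proof -
      have "D \<subseteq> K" if DT: "D \<in> T" for D
      proof -
        have Dcl: "D \<in> clique_classes V E" and CD: "quot_adj V E C D" using DT T N_def by auto
        obtain x where xD: "x \<in> D" using class_ne[OF Dcl] by blast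
        have xV: "x \<in> V" using xD Dcl class_subV by auto
        have "x \<in> K"
        proof (rule ccontr)
          assume xK: "x \<notin> K"
          have adj: "E x y" if y: "y \<in> K" for y
          proof -
            have yV: "y \<in> V" using y mK mc_sub by auto
            let ?D' = "clique_class V E y"
            have D'cl: "?D' \<in> clique_classes V E" using class_in[OF yV] .
            show ?thesis
            proof (cases "?D' = D")
              case True
              then have "x \<in> ?D'" using xD by simp
              then have "x \<in> K" using in_K_class[OF mK(1) y] by blast
              then show ?thesis using xK by blast
            next
              case False
              show ?thesis
              proof (cases "?D' = C")
                case True
                then have "E y x" using full_adj[OF Ccl Dcl CD _ xD] class_self[OF yV] by auto
                then show ?thesis using Esym by blast
              next
                case False2: False
                have "y \<noteq> v" using False2 C_def by auto
                then have "E v y" using mc_E[OF mK(1) mK(2) y] by simp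
                then have "quot_adj V E C ?D'" using False2 vC class_self[OF yV] by (auto simp: quot_adj_def)
                moreover have "?D' \<subseteq> K" using in_K_class[OF mK(1) y] by auto
                ultimately have "?D' \<in> S" using D'cl S by (simp add: f_def N_def)
                then have "?D' \<in> T" using T by auto
                then have "quot_adj V E D ?D'" using T(2) DT False unfolding aclq_def by auto
                then show ?thesis using full_adj[OF Dcl D'cl _ xD class_self[OF yV]] by auto
              qed
            qed
          qed
          have "insert x K \<subseteq> V" using mc_sub[OF mK(1)] xV by auto
          moreover have "E a b" if ab: "a \<in> insert x K" "b \<in> insert x K" "a \<noteq> b" for a b
          proof (cases "a = x")
            case True
            then have "b \<in> K" using ab by auto
            then show ?thesis using adj True by simp
          next
            case False
            then have aK: "a \<in> K" using ab by auto
            show ?thesis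
            proof (cases "b = x")
              case True
              then show ?thesis using Esym[OF adj[OF aK]] by simp
            next
              case False
              then have "b \<in> K" using ab by auto
              then show ?thesis using mc_E[OF mK(1) aK _ ab(3)] by simp
            qed
          qed
          ultimately have "is_clique V E (insert x K)" unfolding is_clique_def by blast
          then have "insert x K = K" using mc_max[OF mK(1)] by blast
          then show False using xK by auto
        qed
        then show ?thesis using class_in_K[OF mK(1) Dcl] xD by auto
      qed
      then have "T \<subseteq> S" using T S by (auto simp: f_def)
      then show ?thesis using T by auto
    qed
    show "S \<in> {S. amc N (quot_adj V E) S}" using sN cl mx by (auto simp: amc_def)
  qed
  have "card (cliques_at V E v) \<le> card {S. amc N (quot_adj V E) S}"
    by (rule card_inj_on_le[OF inj img amc_finite[OF fN]])
  then have "real (card (cliques_at V E v)) \<le> real (card {S. amc N (quot_adj V E) S})" by simp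
  also have "\<dots> \<le> 3 powr (real (card N) / 3)" by (rule moon_moser[OF fN quot_sym])
  finally show ?thesis by (simp add: N_def C_def quot_deg_def)
qed

lemma part2: "cideg V E \<le> 3 ^ nat \<lceil>real (tDelta V E) / 3\<rceil>"
proof -
  have "card (cliques_at V E v) \<le> 3 ^ nat \<lceil>real (tDelta V E) / 3\<rceil>" if v: "v \<in> V" for v
  proof -
    have "real (card (cliques_at V E v)) \<le> 3 powr (real (quot_deg V E (clique_class V E v)) / 3)"
      by (rule ca_bound[OF v])
    also have "\<dots> \<le> 3 powr (real (tDelta V E) / 3)"
      using deg_le[OF class_in[OF v]] by (intro powr_mono) auto
    also have "\<dots> \<le> 3 powr (real (nat \<lceil>real (tDelta V E) / 3\<rceil>))"
    proof (intro powr_mono)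
      have c0: "0 \<le> \<lceil>real (tDelta V E) / 3\<rceil>" by simp
      have "real (tDelta V E) / 3 \<le> real_of_int \<lceil>real (tDelta V E) / 3\<rceil>" by (rule le_of_int_ceiling)
      also have "\<dots> = real (nat \<lceil>real (tDelta V E) / 3\<rceil>)" using c0 by simp
      finally show "real (tDelta V E) / 3 \<le> real (nat \<lceil>real (tDelta V E) / 3\<rceil>)" .
    qed simp
    also have "\<dots> = 3 ^ nat \<lceil>real (tDelta V E) / 3\<rceil>" by (rule powr_realpow) simp
    finally have "real (card (cliques_at V E v)) \<le> real (3 ^ nat \<lceil>real (tDelta V E) / 3\<rceil>)" by simp
    then show ?thesis by linarith
  qed
  then show ?thesis unfolding cideg_def using finV by (intro Max.boundedI) auto
qed

end

theorem lemma3p4: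
  fixes V :: "'a set" and E :: "'a \<Rightarrow> 'a \<Rightarrow> bool"
  assumes "fin_graph V E"
  shows "(\<not> quot_edgeless V E \<longrightarrow> tomega V E \<le> tDelta V E)
       \<and> (quot_edgeless V E \<longrightarrow> tomega V E \<le> 1 \<and> tDelta V E = 0)
       \<and> cideg V E \<le> 3 ^ nat \<lceil>real (tDelta V E) / 3\<rceil>
       \<and> int (tDelta V E) \<le> int (cideg V E) * (int (tomega V E) - 1)"
  using part1[OF assms] part1b[OF assms] part2[OF assms] part3[OF assms] by blast

end
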